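(* Let $\mathcal C=\mathrm{code}(\mathcal H,X)\subseteq2^{[n]}$ be a stable hyperplane code. Then $\mathcal C$ has no chamber obstructions: there is no maximal face $\sigma$ of $\mathrm{cham}(\mathcal C)$ for which there exist two distinct faces $T_1\neq T_2$ of $\Gamma(\mathcal C)$ with $\operatorname{link}_{T_1}\Gamma(\mathcal C)=\operatorname{link}_{T_2}\Gamma(\mathcal C)=\Gamma(2^\sigma)$.
   Context: A code is a subset $\mathcal C\subseteq 2^{[n]}$. An oriented affine hyperplane in $\mathbb R^d$ is $H=\{x:w\cdot x-h=0\}$, $w\ne0$, with $H^+=\{w\cdot x-h>0\}$, $H^-=\{w\cdot x-h<0\}$. For $\mathcal H=\{H_1,\dots,H_n\}$ and open convex $X\subseteq\mathbb R^d$, the atom of $\sigma\subseteq[n]$ is $A_\sigma=\bigl(\bigcap_{i\in\sigma}(H_i^+\cap X)\bigr)\setminus\bigcup_{j\notin\sigma}H_j^+$ ($A_\emptyset=X\setminus\bigcup_iH_i^+$), and $\mathrm{code}(\mathcal H,X)=\{\sigma:A_\sigma\ne\emptyset\}$. $(\mathcal H,X)$ is stable if $X$ is open convex and whenever $X\cap\bigcap_{i\in\sigma}H_i\ne\emptyset$, $\dim\bigcap_{i\in\sigma}H_i=d-|\sigma|$; a stable hyperplane code is the code of a stable pair. Polar complex: vertex set $[n]\sqcup\{\bar1,\dots,\bar n\}$; $\Sigma(\sigma)=\sigma\sqcup\{\bar i:i\notin\sigma\}$; $\Gamma(\mathcal C)$ is the complex of all subsets of $\Sigma(\sigma)$, $\sigma\in\mathcal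 C$. For a face $T$, its support $\underline T$ is the set of $i\in[n]$ such that $i\in T$ or $\bar i\in T$. For $S\subseteq[n]$, $\Gamma(2^S)$ is the complex on $S\sqcup\{\bar i:i\in S\}$ whose faces are all subsets containing no pair $\{i,\bar i\}$ ($\Gamma(2^\emptyset)=\{\emptyset\}$). $\operatorname{link}_T\Delta=\{\nu\in\Delta:\nu\cap T=\emptyset,\nu\cup T\in\Delta\}$. The combinatorial chamber complex $\mathrm{cham}(\mathcal C)$ is the set of $\sigma\subseteq[n]$ for which there exists $T\in\Gamma(\mathcal C)$ with $\underline T=[n]\setminus\sigma$ and $\operatorname{link}_T\Gamma(\mathcal C)=\Gamma(2^\sigma)$; it is a simplicial complex. *)

theory Defs
  imports "HOL-Analysis.Analysis"
begin

text \<open>Ground set [n] = {1..n}. A hyperplane arrangement H_1..H_n in a euclidean space 'a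
  is given by normal vectors w i and offsets h i: H_i = {x. w i \<bullet> x - h i = 0}.\<close>

definition hyp :: "(nat \<Rightarrow> 'a::euclidean_space) \<Rightarrow> (nat \<Rightarrow> real) \<Rightarrow> nat \<Rightarrow> 'a set" where
  "hyp w h i = {x. w i \<bullet> x - h i = 0}"

definition hyp_pos :: "(nat \<Rightarrow> 'a::euclidean_space) \<Rightarrow> (nat \<Rightarrow> real) \<Rightarrow> nat \<Rightarrow> 'a set" where
  "hyp_pos w h i = {x. w i \<bullet> x - h i > 0}"

definition atom :: "nat \<Rightarrow> (nat \<Rightarrow> 'a::euclidean_space) \<Rightarrow> (nat \<Rightarrow> real) \<Rightarrow> 'a set \<Rightarrow> nat set \<Rightarrow> 'a set" where
  "atom n w h X \<sigma> = (X \<inter> (\<Inter>i\<in>\<sigma>. hyp_pos w h i)) - (\<Union>j\<in>{1..n} - \<sigma>. hyp_pos w h j)"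

definition hcode :: "nat \<Rightarrow> (nat \<Rightarrow> 'a::euclidean_space) \<Rightarrow> (nat \<Rightarrow> real) \<Rightarrow> 'a set \<Rightarrow> nat set set" where
  "hcode n w h X = {\<sigma>. \<sigma> \<subseteq> {1..n} \<and> atom n w h X \<sigma> \<noteq> {}}"

definition stable_pair :: "nat \<Rightarrow> (nat \<Rightarrow> 'a::euclidean_space) \<Rightarrow> (nat \<Rightarrow> real) \<Rightarrow> 'a set \<Rightarrow> bool" where
  "stable_pair n w h X \<longleftrightarrow> (\<forall>i\<in>{1..n}. w i \<noteq> 0) \<and> open X \<and> convex X \<and>
     (\<forall>\<sigma>. \<sigma> \<subseteq> {1..n} \<longrightarrow> X \<inter> (\<Inter>i\<in>\<sigma>. hyp w h i) \<noteq> {} \<longrightarrow>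
        aff_dim (\<Inter>i\<in>\<sigma>. hyp w h i) = int DIM('a) - int (card \<sigma>))"

text \<open>Polar complex: vertex i is Inl i, vertex bar i is Inr i.\<close>

definition polar_face :: "nat \<Rightarrow> nat set \<Rightarrow> (nat + nat) set" where
  "polar_face n \<sigma> = Inl ` \<sigma> \<union> Inr ` ({1..n} - \<sigma>)"

definition polar_complex :: "nat \<Rightarrow> nat set set \<Rightarrow> (nat + nat) set set" where
  "polar_complex n C = {T. \<exists>\<sigma>\<in>C. T \<subseteq> polar_face n \<sigma>}"

definition supp :: "(nat + nat) set \<Rightarrow> nat set" where
  "supp T = {i. Inl i \<in> T \<or> Inr i \<in> T}"

definition full_polar :: "nat set \<Rightarrow> (nat + nat) set set" where
  "full_polar S = {T. T \<subseteq> Inl ` S \<union> Inr ` S \<and> \<not> (\<exists>i. Inl i \<in> T \<and> Inr i \<in> T)}"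

definition link :: "'v set \<Rightarrow> 'v set set \<Rightarrow> 'v set set" where
  "link T \<Delta> = {\<nu>\<in>\<Delta>. \<nu> \<inter> T = {} \<and> \<nu> \<union> T \<in> \<Delta>}"

definition cham :: "nat \<Rightarrow> nat set set \<Rightarrow> nat set set" where
  "cham n C = {\<sigma>. \<exists>T\<in>polar_complex n C. supp T = {1..n} - \<sigma> \<and>
                     link T (polar_complex n C) = full_polar \<sigma>}"

definition chamber_obstruction :: "nat \<Rightarrow> nat set set \<Rightarrow> nat set \<Rightarrow> bool" where
  "chamber_obstruction n C \<sigma> \<longleftrightarrow>
     \<sigma> \<in> cham n C \<and> (\<forall>\<tau>\<in>cham n C. \<sigma> \<subseteq> \<tau> \<longrightarrow> \<tau> = \<sigma>) \<and>
     (\<exists>T1\<in>polar_complex n C. \<exists>T2\<in>polar_complex n C. T1 \<noteq> T2 \<and>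
        link T1 (polar_complex n C) = full_polar \<sigma> \<and> link T2 (polar_complex n C) = full_polar \<sigma>)"

end

theory Submission
  imports Defs
begin

lemma mem_hyp_Inter: "x \<in> (\<Inter>i\<in>S. hyp w h i) \<longleftrightarrow> (\<forall>i\<in>S. w i \<bullet> x = h i)"
  by (auto simp: hyp_def)

lemma mem_atom: "x \<in> atom n w h X \<tau> \<longleftrightarrow> x \<in> X \<and> (\<forall>i\<in>\<tau>. w i \<bullet> x > h i) \<and> (\<forall>j\<in>{1..n} - \<tau>. \<not> w j \<bullet> x > h j)"
  by (auto simp: atom_def hyp_pos_def)

lemma solve:
  assumes st: "stable_pair n w h X" and y: "y \<in> X"
    and S: "S = {i\<in>{1..n}. w i \<bullet> y = h i}"
  shows "\<exists>v. \<forall>i\<in>S. w i \<bullet> v = c i"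
proof -
  have fin: "finite S" using S by auto
  have affS: "\<And>F. F \<subseteq> S \<Longrightarrow> aff_dim (\<Inter>i\<in>F. hyp w h i) = int DIM('a) - int (card F)"
  proof -
    fix F assume F: "F \<subseteq> S"
    have "y \<in> X \<inter> (\<Inter>i\<in>F. hyp w h i)" using F y S by (auto simp: hyp_def)
    then show "aff_dim (\<Inter>i\<in>F. hyp w h i) = int DIM('a) - int (card F)"
      using st F S unfolding stable_pair_def by blast
  qed
  have "\<forall>i\<in>S. \<exists>u. (\<forall>k\<in>S-{i}. w k \<bullet> u = 0) \<and> w i \<bullet> u \<noteq> 0"
  proof
    fix i assume i: "i \<in> S"
    have c1: "card (S - {i}) = card S - 1" using i fin by simp
    have c2: "card S \<ge> 1" using i fin by (auto simp: Suc_le_eq card_gt_0_iff)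
    have "aff_dim (\<Inter>k\<in>S. hyp w h k) \<noteq> aff_dim (\<Inter>k\<in>S-{i}. hyp w h k)"
      using affS[of S] affS[of "S-{i}"] c1 c2 by auto
    then have ne: "(\<Inter>k\<in>S. hyp w h k) \<noteq> (\<Inter>k\<in>S-{i}. hyp w h k)" by metis
    have "(\<Inter>k\<in>S. hyp w h k) \<subseteq> (\<Inter>k\<in>S-{i}. hyp w h k)" by blast
    with ne obtain p where p: "p \<in> (\<Inter>k\<in>S-{i}. hyp w h k)" "p \<notin> (\<Inter>k\<in>S. hyp w h k)" by blast
    then have p1: "\<forall>k\<in>S-{i}. w k \<bullet> p = h k" by (auto simp: hyp_def)
    have p2: "w i \<bullet> p \<noteq> h i"
    proof
      assume "w i \<bullet> p = h i"
      with p1 have "p \<in> (\<Inter>k\<in>S. hyp w h k)" by (auto simp: hyp_def)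
      with p(2) show False by blast
    qed
    have yS: "\<forall>k\<in>S. w k \<bullet> y = h k" using S by auto
    show "\<exists>u. (\<forall>k\<in>S-{i}. w k \<bullet> u = 0) \<and> w i \<bullet> u \<noteq> 0"
      by (rule exI[of _ "p - y"]) (use p1 p2 yS i in \<open>auto simp: inner_diff_right\<close>)
  qed
  then obtain U where U: "\<And>i. i \<in> S \<Longrightarrow> (\<forall>k\<in>S-{i}. w k \<bullet> U i = 0) \<and> w i \<bullet> U i \<noteq> 0"
    by metis
  define v where "v = (\<Sum>i\<in>S. (c i / (w i \<bullet> U i)) *\<^sub>R U i)"
  have "\<forall>k\<in>S. w k \<bullet> v = c k"
  proof
    fix k assume k: "k \<in> S"
    have "w k \<bullet> v = (\<Sum>i\<in>S. (c i / (w i \<bullet> U i)) * (w k \<bullet> U i))"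
      unfolding v_def by (simp add: inner_sum_right)
    also have "\<dots> = (c k / (w k \<bullet> U k)) * (w k \<bullet> U k) + (\<Sum>i\<in>S-{k}. (c i / (w i \<bullet> U i)) * (w k \<bullet> U i))"
      using k fin by (simp add: sum.remove)
    also have "(\<Sum>i\<in>S-{k}. (c i / (w i \<bullet> U i)) * (w k \<bullet> U i)) = 0"
      using U k by (intro sum.neutral) auto
    finally show "w k \<bullet> v = c k" using U[OF k] by simp
  qed
  then show ?thesis by blast
qed

lemma perturb:
  assumes st: "stable_pair n w h X" and y: "y \<in> X"
    and S: "S = {i\<in>{1..n}. w i \<bullet> y = h i}" and s: "s \<subseteq> S"
  shows "\<exists>z. z \<in> atom n w h X (s \<union> {j\<in>{1..n}. w j \<bullet> y > h j})"
proof -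
  obtain v where v: "\<forall>i\<in>S. w i \<bullet> v = (if i \<in> s then 1 else -1)"
    using solve[OF st y S, of "\<lambda>i. if i \<in> s then 1 else -1"] by blast
  have opn: "open X" using st by (simp add: stable_pair_def)
  have lim: "((\<lambda>t. y + t *\<^sub>R v) \<longlongrightarrow> y) (at_right (0::real))"
  proof -
    have "((\<lambda>t. y + t *\<^sub>R v) \<longlongrightarrow> y + 0 *\<^sub>R v) (at_right (0::real))"
      by (intro tendsto_intros)
    then show ?thesis by simp
  qed
  have e1: "eventually (\<lambda>t. y + t *\<^sub>R v \<in> X) (at_right (0::real))"
    using topological_tendstoD[OF lim opn y] .
  have lim2: "\<And>j. ((\<lambda>t. w j \<bullet> (y + t *\<^sub>R v)) \<longlongrightarrow> w j \<bullet> y) (at_right (0::real))"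
    by (intro tendsto_intros lim)
  have e2: "eventually (\<lambda>t. \<forall>j\<in>{1..n}. (w j \<bullet> y > h j \<longrightarrow> w j \<bullet> (y + t *\<^sub>R v) > h j) \<and>
                 (w j \<bullet> y < h j \<longrightarrow> w j \<bullet> (y + t *\<^sub>R v) < h j)) (at_right (0::real))"
  proof (rule eventually_ball_finite, simp, intro ballI)
    fix j
    show "eventually (\<lambda>t. (w j \<bullet> y > h j \<longrightarrow> w j \<bullet> (y + t *\<^sub>R v) > h j) \<and>
                 (w j \<bullet> y < h j \<longrightarrow> w j \<bullet> (y + t *\<^sub>R v) < h j)) (at_right (0::real))"
    proof (intro eventually_conj)
      show "eventually (\<lambda>t. w j \<bullet> y > h j \<longrightarrow> w j \<bullet> (y + t *\<^sub>R v) > h j) (at_right (0::real))"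
      proof (cases "w j \<bullet> y > h j")
        case True
        then show ?thesis using order_tendstoD(1)[OF lim2 True] by (auto elim: eventually_mono)
      qed simp
      show "eventually (\<lambda>t. w j \<bullet> y < h j \<longrightarrow> w j \<bullet> (y + t *\<^sub>R v) < h j) (at_right (0::real))"
      proof (cases "w j \<bullet> y < h j")
        case True
        then show ?thesis using order_tendstoD(2)[OF lim2 True] by (auto elim: eventually_mono)
      qed simp
    qed
  qed
  have "eventually (\<lambda>t. 0 < t \<and> y + t *\<^sub>R v \<in> X \<and> (\<forall>j\<in>{1..n}. (w j \<bullet> y > h j \<longrightarrow> w j \<bullet> (y + t *\<^sub>R v) > h j) \<and>
                 (w j \<bullet> y < h j \<longrightarrow> w j \<bullet> (y + t *\<^sub>R v) < h j))) (at_right (0::real))"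
    using eventually_at_right_less e1 e2 by (intro eventually_conj)
  then obtain t where t: "0 < t" "y + t *\<^sub>R v \<in> X"
    "\<forall>j\<in>{1..n}. (w j \<bullet> y > h j \<longrightarrow> w j \<bullet> (y + t *\<^sub>R v) > h j) \<and>
                 (w j \<bullet> y < h j \<longrightarrow> w j \<bullet> (y + t *\<^sub>R v) < h j)"
    using eventually_happens[of _ "at_right (0::real)"] by force
  have onS: "\<And>i. i \<in> S \<Longrightarrow> w i \<bullet> (y + t *\<^sub>R v) = h i + t * (if i \<in> s then 1 else -1)"
    using v S by (auto simp: inner_add_right)
  have "y + t *\<^sub>R v \<in> atom n w h X (s \<union> {j\<in>{1..n}. w j \<bullet> y > h j})"
    unfolding mem_atom
  proof (intro conjI ballI)
    show "y + t *\<^sub>R v \<in> X" by fact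
  next
    fix i assume "i \<in> s \<union> {j\<in>{1..n}. w j \<bullet> y > h j}"
    then show "w i \<bullet> (y + t *\<^sub>R v) > h i"
    proof
      assume "i \<in> s" then show ?thesis using onS[of i] s t(1) by auto
    next
      assume "i \<in> {j\<in>{1..n}. w j \<bullet> y > h j}" then show ?thesis using t(3) by auto
    qed
  next
    fix j assume j: "j \<in> {1..n} - (s \<union> {j\<in>{1..n}. w j \<bullet> y > h j})"
    show "\<not> w j \<bullet> (y + t *\<^sub>R v) > h j"
    proof (cases "j \<in> S")
      case True then show ?thesis using onS[of j] j t(1) by auto
    next
      case False
      then have "w j \<bullet> y < h j" using j S by auto
      then show ?thesis using t(3) j by force
    qed
  qed
  then show ?thesis by blast
qed

lemma point_cham:
  assumes st: "stable_pair n w h X" and y: "y \<in> X"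
  shows "{i\<in>{1..n}. w i \<bullet> y = h i} \<in> cham n (hcode n w h X)"
proof -
  define S where "S = {i\<in>{1..n}. w i \<bullet> y = h i}"
  define P where "P = {j\<in>{1..n}. w j \<bullet> y > h j}"
  define N where "N = {j\<in>{1..n}. w j \<bullet> y < h j}"
  define T where "T = Inl ` P \<union> Inr ` N"
  let ?C = "hcode n w h X"
  have yP: "y \<in> atom n w h X P" using y unfolding mem_atom P_def by auto
  have PC: "P \<in> ?C" using yP unfolding hcode_def P_def by auto
  have Tpf: "T \<subseteq> polar_face n P"
    unfolding T_def polar_face_def P_def N_def by auto
  have TG: "T \<in> polar_complex n ?C" using PC Tpf unfolding polar_complex_def by blast
  have suppT: "supp T = {1..n} - S"
    proof (rule set_eqI)
    fix i
    have "i \<in> supp T \<longleftrightarrow> i \<in> P \<or> i \<in> N" unfolding supp_def T_def by auto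
    also have "\<dots> \<longleftrightarrow> i \<in> {1..n} - S" unfolding P_def N_def S_def by auto
    finally show "i \<in> supp T \<longleftrightarrow> i \<in> {1..n} - S" .
  qed
  have Csub: "\<And>\<tau>. \<tau> \<in> ?C \<Longrightarrow> \<tau> \<subseteq> {1..n}" unfolding hcode_def by auto
  have "link T (polar_complex n ?C) = full_polar S"
  proof
    show "link T (polar_complex n ?C) \<subseteq> full_polar S"
    proof
      fix \<nu> assume "\<nu> \<in> link T (polar_complex n ?C)"
      then have dis: "\<nu> \<inter> T = {}" and "\<nu> \<union> T \<in> polar_complex n ?C"
        unfolding link_def by auto
      then obtain \<tau> where \<tau>: "\<tau> \<in> ?C" "\<nu> \<union> T \<subseteq> polar_face n \<tau>"
        unfolding polar_complex_def by blast
      have \<tau>n: "\<tau> \<subseteq> {1..n}" using Csub \<tau>(1) .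
      have pf: "\<And>i. Inl i \<in> polar_face n \<tau> \<longleftrightarrow> i \<in> \<tau>" "\<And>i. Inr i \<in> polar_face n \<tau> \<longleftrightarrow> i \<in> {1..n} - \<tau>"
        unfolding polar_face_def by auto
      show "\<nu> \<in> full_polar S"
        unfolding full_polar_def
      proof (intro CollectI conjI subsetI notI)
        fix x assume x: "x \<in> \<nu>"
        show "x \<in> Inl ` S \<union> Inr ` S"
        proof (cases x)
          case (Inl i)
          then have i: "i \<in> \<tau>" using x \<tau>(2) pf by auto
          have "i \<in> S"
          proof (rule ccontr)
            assume "i \<notin> S"
            then have "i \<in> P \<or> i \<in> N" using i \<tau>n unfolding S_def P_def N_def by auto
            then show False
            proof
              assume "i \<in> P" then have "Inl i \<in> T" unfolding T_def by auto
              then show False using dis x Inl by auto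
            next
              assume "i \<in> N" then have "Inr i \<in> T" unfolding T_def by auto
              then show False using \<tau>(2) pf i by auto
            qed
          qed
          then show ?thesis using Inl by auto
        next
          case (Inr i)
          then have i: "i \<in> {1..n} - \<tau>" using x \<tau>(2) pf by auto
          have "i \<in> S"
          proof (rule ccontr)
            assume "i \<notin> S"
            then have "i \<in> P \<or> i \<in> N" using i unfolding S_def P_def N_def by auto
            then show False
            proof
              assume "i \<in> N" then have "Inr i \<in> T" unfolding T_def by auto
              then show False using dis x Inr by auto
            next
              assume "i \<in> P" then have "Inl i \<in> T" unfolding T_def by auto
              then show False using \<tau>(2) pf i by auto
            qed
          qed
          then show ?thesis using Inr by auto
        qed
      next
        assume "\<exists>i. Inl i \<in> \<nu> \<and> Inr i \<in> \<nu>"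
        then show False using \<tau>(2) pf by auto
      qed
    qed
  next
    show "full_polar S \<subseteq> link T (polar_complex n ?C)"
    proof
      fix \<nu> assume \<nu>: "\<nu> \<in> full_polar S"
      define s where "s = {i. Inl i \<in> \<nu>}"
      have \<nu>': "\<nu> \<subseteq> Inl ` S \<union> Inr ` S" "\<And>i. \<not> (Inl i \<in> \<nu> \<and> Inr i \<in> \<nu>)"
        using \<nu> unfolding full_polar_def by auto
      have sS: "s \<subseteq> S" using \<nu>'(1) unfolding s_def by auto
      obtain z where z: "z \<in> atom n w h X (s \<union> P)"
        using perturb[OF st y S_def sS] unfolding P_def by blast
      have SP: "S \<inter> P = {}" "S \<inter> N = {}" unfolding S_def P_def N_def by auto
      have sub: "s \<union> P \<subseteq> {1..n}" using sS unfolding S_def P_def by auto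
      have C': "s \<union> P \<in> ?C" using z sub unfolding hcode_def by auto
      have "\<nu> \<union> T \<subseteq> polar_face n (s \<union> P)"
      proof
        fix x assume x: "x \<in> \<nu> \<union> T"
        show "x \<in> polar_face n (s \<union> P)"
        proof (cases "x \<in> \<nu>")
          case True
          show ?thesis
          proof (cases x)
            case (Inl i) then show ?thesis using True unfolding polar_face_def s_def by auto
          next
            case (Inr i)
            then have iS: "i \<in> S" using True \<nu>'(1) by auto
            have "i \<notin> s" using True Inr \<nu>'(2) unfolding s_def by auto
            moreover have "i \<notin> P" using iS SP by auto
            moreover have "i \<in> {1..n}" using iS unfolding S_def by auto
            ultimately show ?thesis using Inr unfolding polar_face_def by auto
          qed
        next
          case False
          then have "x \<in> T" using x by auto
          then show ?thesis
          proof (unfold T_def, elim UnE imageE)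
            fix i assume "i \<in> P" "x = Inl i" then show ?thesis unfolding polar_face_def by auto
          next
            fix i assume i: "i \<in> N" "x = Inr i"
            then have "i \<notin> s" "i \<notin> P" "i \<in> {1..n}" using sS SP unfolding P_def N_def by auto
            then show ?thesis using i unfolding polar_face_def by auto
          qed
        qed
      qed
      then have uG: "\<nu> \<union> T \<in> polar_complex n ?C" using C' unfolding polar_complex_def by blast
      then have "\<nu> \<in> polar_complex n ?C" unfolding polar_complex_def by blast
      moreover have "\<nu> \<inter> T = {}"
        using \<nu>'(1) SP unfolding T_def by auto
      ultimately show "\<nu> \<in> link T (polar_complex n ?C)" using uG unfolding link_def by auto
    qed
  qed
  then show ?thesis using TG suppT unfolding cham_def S_def by blast
qed

lemma link_supp:
  assumes T: "T \<in> polar_complex n (hcode n w h X)"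
    and L: "link T (polar_complex n (hcode n w h X)) = full_polar \<sigma>"
  shows "\<sigma> \<subseteq> {1..n}" "supp T = {1..n} - \<sigma>"
proof -
  let ?G = "polar_complex n (hcode n w h X)"
  have Csub: "\<And>\<tau>. \<tau> \<in> hcode n w h X \<Longrightarrow> \<tau> \<subseteq> {1..n}" unfolding hcode_def by auto
  have pf: "\<And>i \<tau>. Inl i \<in> polar_face n \<tau> \<longleftrightarrow> i \<in> \<tau>" "\<And>i \<tau>. Inr i \<in> polar_face n \<tau> \<longleftrightarrow> i \<in> {1..n} - \<tau>"
    unfolding polar_face_def by auto
  have single: "{v} \<in> link T ?G" if "v \<in> Inl ` \<sigma> \<union> Inr ` \<sigma>" for v
    using that unfolding L full_polar_def by auto
  show s1: "\<sigma> \<subseteq> {1..n}"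
  proof
    fix i assume i: "i \<in> \<sigma>"
    then have "{Inl i} \<in> ?G" using single[of "Inl i"] unfolding link_def by auto
    then obtain \<tau> where "\<tau> \<in> hcode n w h X" "Inl i \<in> polar_face n \<tau>" unfolding polar_complex_def by blast
    then show "i \<in> {1..n}" using Csub pf by blast
  qed
  obtain \<tau>0 where \<tau>0: "\<tau>0 \<in> hcode n w h X" "T \<subseteq> polar_face n \<tau>0"
    using T unfolding polar_complex_def by blast
  show "supp T = {1..n} - \<sigma>"
  proof (rule set_eqI, rule iffI)
    fix i assume i: "i \<in> supp T"
    then have "Inl i \<in> T \<or> Inr i \<in> T" unfolding supp_def by auto
    then have "i \<in> {1..n}" using \<tau>0 Csub pf by blast
    moreover have "i \<notin> \<sigma>"
    proof
      assume "i \<in> \<sigma>"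
      then have "{Inl i} \<in> link T ?G" "{Inr i} \<in> link T ?G" using single by auto
      then show False using \<open>Inl i \<in> T \<or> Inr i \<in> T\<close> unfolding link_def by auto
    qed
    ultimately show "i \<in> {1..n} - \<sigma>" by blast
  next
    fix j assume j: "j \<in> {1..n} - \<sigma>"
    show "j \<in> supp T"
    proof (rule ccontr)
      assume "j \<notin> supp T"
      then have nj: "Inl j \<notin> T" "Inr j \<notin> T" unfolding supp_def by auto
      define v where "v = (if j \<in> \<tau>0 then Inl j else Inr j)"
      have "{v} \<union> T \<subseteq> polar_face n \<tau>0" using \<tau>0(2) j pf unfolding v_def by auto
      then have "{v} \<union> T \<in> ?G" "{v} \<in> ?G" using \<tau>0(1) unfolding polar_complex_def by blast+
      moreover have "{v} \<inter> T = {}" using nj unfolding v_def by auto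
      ultimately have "{v} \<in> link T ?G" unfolding link_def by auto
      then have "{v} \<in> full_polar \<sigma>" using L by simp
      then have "j \<in> \<sigma>" unfolding full_polar_def v_def by (auto split: if_splits)
      then show False using j by blast
    qed
  qed
qed

lemma seg:
  fixes a b :: real
  assumes "a > 0" "b \<le> 0"
  obtains t where "0 < t" "t \<le> 1" "(1 - t) * a + t * b = 0"
proof -
  define t where "t = a / (a - b)"
  have "0 < t" "t \<le> 1" using assms unfolding t_def by (auto simp: field_simps)
  moreover have "(1 - t) * a + t * b = 0" using assms unfolding t_def by (auto simp: field_simps)
  ultimately show ?thesis using that by blast
qed

lemma conv_gt:
  fixes a b t :: real
  assumes "0 \<le> t" "t \<le> 1" "a > c" "b > c"
  shows "(1 - t) * a + t * b > c"
proof -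
  have "(1 - t) * a + t * b - c = (1 - t) * (a - c) + t * (b - c)" by algebra
  moreover have "(1 - t) * (a - c) + t * (b - c) > 0"
  proof (cases "t = 1")
    case True then show ?thesis using assms by simp
  next
    case False
    then have "(1 - t) * (a - c) > 0" using assms by simp
    moreover have "t * (b - c) \<ge> 0" using assms by simp
    ultimately show ?thesis by linarith
  qed
  ultimately show ?thesis by linarith
qed

lemma conv_le:
  fixes a b t :: real
  assumes "0 \<le> t" "t \<le> 1" "a \<le> c" "b \<le> c"
  shows "(1 - t) * a + t * b \<le> c"
proof -
  have "(1 - t) * a + t * b - c = (1 - t) * (a - c) + t * (b - c)" by algebra
  moreover have "(1 - t) * (a - c) \<le> 0" using assms by (simp add: mult_nonneg_nonpos)
  moreover have "t * (b - c) \<le> 0" using assms by (simp add: mult_nonneg_nonpos)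
  ultimately show ?thesis by linarith
qed

lemma inner_comb: "u \<bullet> ((1 - t) *\<^sub>R x1 + t *\<^sub>R x2) = (1 - t) * (u \<bullet> x1) + t * (u \<bullet> x2)"
  by (simp add: inner_add_right)

lemma link_point:
  assumes cx: "convex X" and T: "T \<in> polar_complex n (hcode n w h X)"
    and L: "link T (polar_complex n (hcode n w h X)) = full_polar \<sigma>"
  shows "\<exists>x\<in>X. (\<forall>i\<in>\<sigma>. w i \<bullet> x = h i) \<and> (\<forall>j. Inl j \<in> T \<longrightarrow> w j \<bullet> x > h j)
            \<and> (\<forall>j. Inr j \<in> T \<longrightarrow> w j \<bullet> x \<le> h j)"
proof -
  let ?G = "polar_complex n (hcode n w h X)"
  define P where "P = {j. Inl j \<in> T}"
  define N where "N = {j. Inr j \<in> T}"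
  have sn: "\<sigma> \<subseteq> {1..n}" using link_supp[OF T L] by simp
  have pf: "\<And>i \<tau>. Inl i \<in> polar_face n \<tau> \<longleftrightarrow> i \<in> \<tau>" "\<And>i \<tau>. Inr i \<in> polar_face n \<tau> \<longleftrightarrow> i \<in> {1..n} - \<tau>"
    unfolding polar_face_def by auto
  have main: "F \<subseteq> \<sigma> \<longrightarrow> (\<forall>r. r \<subseteq> \<sigma> - F \<longrightarrow> (\<exists>x\<in>X. (\<forall>i\<in>P \<union> r. w i \<bullet> x > h i)
       \<and> (\<forall>i\<in>N \<union> (\<sigma> - F - r). w i \<bullet> x \<le> h i) \<and> (\<forall>i\<in>F. w i \<bullet> x = h i)))"
    if fin: "finite F" for F
    using fin
  proof (induction F rule: finite_induct)
    case empty
    show ?case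
    proof (intro impI allI)
      fix r assume r: "r \<subseteq> \<sigma> - {}"
      define \<nu> where "\<nu> = Inl ` r \<union> Inr ` (\<sigma> - r)"
      have "\<nu> \<in> full_polar \<sigma>" using r unfolding \<nu>_def full_polar_def by auto
      then have "\<nu> \<union> T \<in> ?G" using L unfolding link_def by blast
      then obtain \<tau> where \<tau>: "\<tau> \<in> hcode n w h X" "\<nu> \<union> T \<subseteq> polar_face n \<tau>"
        unfolding polar_complex_def by blast
      then obtain x where x: "x \<in> atom n w h X \<tau>" unfolding hcode_def by auto
      have A: "\<forall>i\<in>P \<union> r. w i \<bullet> x > h i"
      proof
        fix i assume "i \<in> P \<union> r"
        then have "Inl i \<in> \<nu> \<union> T" unfolding P_def \<nu>_def by auto
        then have "i \<in> \<tau>" using \<tau>(2) pf by blast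
        then show "w i \<bullet> x > h i" using x unfolding mem_atom by auto
      qed
      have B: "\<forall>i\<in>N \<union> (\<sigma> - {} - r). w i \<bullet> x \<le> h i"
      proof
        fix i assume "i \<in> N \<union> (\<sigma> - {} - r)"
        then have "Inr i \<in> \<nu> \<union> T" unfolding N_def \<nu>_def by auto
        then have "i \<in> {1..n} - \<tau>" using \<tau>(2) pf by blast
        then have "\<not> w i \<bullet> x > h i" using x unfolding mem_atom by blast
        then show "w i \<bullet> x \<le> h i" by simp
      qed
      show "\<exists>x\<in>X. (\<forall>i\<in>P \<union> r. w i \<bullet> x > h i)
       \<and> (\<forall>i\<in>N \<union> (\<sigma> - {} - r). w i \<bullet> x \<le> h i) \<and> (\<forall>i\<in>{}. w i \<bullet> x = h i)"
        using A B x unfolding mem_atom by auto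
    qed
  next
    case (insert k F)
    show ?case
    proof (intro impI allI)
      assume kF: "insert k F \<subseteq> \<sigma>"
      fix r assume r: "r \<subseteq> \<sigma> - insert k F"
      have IH: "\<forall>r. r \<subseteq> \<sigma> - F \<longrightarrow> (\<exists>x\<in>X. (\<forall>i\<in>P \<union> r. w i \<bullet> x > h i)
       \<and> (\<forall>i\<in>N \<union> (\<sigma> - F - r). w i \<bullet> x \<le> h i) \<and> (\<forall>i\<in>F. w i \<bullet> x = h i))"
        using insert.IH kF by blast
      obtain x1 where x1: "x1 \<in> X" "\<forall>i\<in>P \<union> insert k r. w i \<bullet> x1 > h i"
        "\<forall>i\<in>N \<union> (\<sigma> - F - insert k r). w i \<bullet> x1 \<le> h i" "\<forall>i\<in>F. w i \<bullet> x1 = h i"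
        using IH[rule_format, of "insert k r"] r kF insert.hyps by blast
      obtain x2 where x2: "x2 \<in> X" "\<forall>i\<in>P \<union> r. w i \<bullet> x2 > h i"
        "\<forall>i\<in>N \<union> (\<sigma> - F - r). w i \<bullet> x2 \<le> h i" "\<forall>i\<in>F. w i \<bullet> x2 = h i"
        using IH[rule_format, of r] r by blast
      have k1: "w k \<bullet> x1 - h k > 0" using x1(2) by auto
      have k2: "w k \<bullet> x2 - h k \<le> 0" using x2(3) r kF insert.hyps by auto
      obtain t where t: "0 < t" "t \<le> 1" "(1 - t) * (w k \<bullet> x1 - h k) + t * (w k \<bullet> x2 - h k) = 0"
        using seg[OF k1 k2] by blast
      define y where "y = (1 - t) *\<^sub>R x1 + t *\<^sub>R x2"
      have yX: "y \<in> X" unfolding y_def using cx x1(1) x2(1) t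
        by (intro convexD) auto
      have yk: "w k \<bullet> y = h k" using t(3) unfolding y_def inner_comb by (simp add: algebra_simps)
      have yF: "\<forall>i\<in>insert k F. w i \<bullet> y = h i"
        using yk x1(4) x2(4) unfolding y_def inner_comb by (auto simp: algebra_simps)
      have yA: "\<forall>i\<in>P \<union> r. w i \<bullet> y > h i"
        using x1(2) x2(2) t unfolding y_def inner_comb by (auto intro!: conv_gt)
      have yB: "\<forall>i\<in>N \<union> (\<sigma> - insert k F - r). w i \<bullet> y \<le> h i"
      proof
        fix i assume i: "i \<in> N \<union> (\<sigma> - insert k F - r)"
        then have "w i \<bullet> x1 \<le> h i" "w i \<bullet> x2 \<le> h i" using x1(3) x2(3) by auto
        then show "w i \<bullet> y \<le> h i" using t unfolding y_def inner_comb by (auto intro!: conv_le)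
      qed
      show "\<exists>x\<in>X. (\<forall>i\<in>P \<union> r. w i \<bullet> x > h i)
       \<and> (\<forall>i\<in>N \<union> (\<sigma> - insert k F - r). w i \<bullet> x \<le> h i) \<and> (\<forall>i\<in>insert k F. w i \<bullet> x = h i)"
        using yX yA yB yF by blast
    qed
  qed
  have "finite \<sigma>" using sn finite_subset by blast
  from main[OF this] obtain x where "x \<in> X" "\<forall>i\<in>P. w i \<bullet> x > h i" "\<forall>i\<in>N. w i \<bullet> x \<le> h i"
    "\<forall>i\<in>\<sigma>. w i \<bullet> x = h i"
    by auto
  then show ?thesis unfolding P_def N_def by auto
qed

theorem theoremC:
  fixes n :: nat and w :: "nat \<Rightarrow> 'a::euclidean_space" and h :: "nat \<Rightarrow> real" and X :: "'a set"
  assumes "stable_pair n w h X"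
  shows "\<not> (\<exists>\<sigma>. chamber_obstruction n (hcode n w h X) \<sigma>)"
proof
  assume "\<exists>\<sigma>. chamber_obstruction n (hcode n w h X) \<sigma>"
  then obtain \<sigma> T1 T2 where
    max: "\<forall>\<tau>\<in>cham n (hcode n w h X). \<sigma> \<subseteq> \<tau> \<longrightarrow> \<tau> = \<sigma>" and
    T1: "T1 \<in> polar_complex n (hcode n w h X)" and T2: "T2 \<in> polar_complex n (hcode n w h X)"
    and ne: "T1 \<noteq> T2"
    and L1: "link T1 (polar_complex n (hcode n w h X)) = full_polar \<sigma>"
    and L2: "link T2 (polar_complex n (hcode n w h X)) = full_polar \<sigma>"
    unfolding chamber_obstruction_def by blast
  have cx: "convex X" using assms by (simp add: stable_pair_def)
  have sn: "\<sigma> \<subseteq> {1..n}" and s1: "supp T1 = {1..n} - \<sigma>" and s2: "supp T2 = {1..n} - \<sigma>"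
    using link_supp[OF T1 L1] link_supp[OF T2 L2] by auto
  have nb: "\<And>T j. T \<in> polar_complex n (hcode n w h X) \<Longrightarrow> \<not> (Inl j \<in> T \<and> Inr j \<in> T)"
    unfolding polar_complex_def polar_face_def by blast
  have key: False if Ta: "Ta \<in> polar_complex n (hcode n w h X)" "link Ta (polar_complex n (hcode n w h X)) = full_polar \<sigma>"
    and Tb: "Tb \<in> polar_complex n (hcode n w h X)" "link Tb (polar_complex n (hcode n w h X)) = full_polar \<sigma>"
    and j: "Inl j \<in> Ta" "Inr j \<in> Tb" for Ta Tb j
  proof -
    obtain xa where xa: "xa \<in> X" "\<forall>i\<in>\<sigma>. w i \<bullet> xa = h i" "w j \<bullet> xa > h j"
      using link_point[OF cx Ta] j by blast
    obtain xb where xb: "xb \<in> X" "\<forall>i\<in>\<sigma>. w i \<bullet> xb = h i" "w j \<bullet> xb \<le> h j"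
      using link_point[OF cx Tb] j by blast
    have jn: "j \<in> {1..n} - \<sigma>" using link_supp(2)[OF Ta] j unfolding supp_def by blast
    have k1: "w j \<bullet> xa - h j > 0" "w j \<bullet> xb - h j \<le> 0" using xa xb by auto
    obtain t where t: "0 < t" "t \<le> 1" "(1 - t) * (w j \<bullet> xa - h j) + t * (w j \<bullet> xb - h j) = 0"
      using seg[OF k1] by blast
    define y where "y = (1 - t) *\<^sub>R xa + t *\<^sub>R xb"
    have yX: "y \<in> X" unfolding y_def using cx xa(1) xb(1) t
      by (intro convexD) auto
    have yk: "w j \<bullet> y = h j" using t(3) unfolding y_def inner_comb by (simp add: algebra_simps)
    have yF: "\<forall>i\<in>\<sigma>. w i \<bullet> y = h i"
      using xa(2) xb(2) unfolding y_def inner_comb by (auto simp: algebra_simps)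
    have "{i\<in>{1..n}. w i \<bullet> y = h i} \<in> cham n (hcode n w h X)" using point_cham[OF assms yX] .
    moreover have "\<sigma> \<subseteq> {i\<in>{1..n}. w i \<bullet> y = h i}" using sn yF by auto
    ultimately have "{i\<in>{1..n}. w i \<bullet> y = h i} = \<sigma>" using max by blast
    then show False using yk jn by auto
  qed
  obtain e where e: "e \<in> T1 - T2 \<or> e \<in> T2 - T1" using ne by blast
  then show False
  proof
    assume e: "e \<in> T1 - T2"
    show False
    proof (cases e)
      case (Inl j)
      then have "j \<in> supp T2" using e s1 s2 unfolding supp_def by blast
      then have "Inr j \<in> T2" using e Inl unfolding supp_def by auto
      then show False using key[OF T1 L1 T2 L2] e Inl by blast
    next
      case (Inr j)
      then have "j \<in> supp T2" using e s1 s2 unfolding supp_def by blast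
      then have "Inl j \<in> T2" using e Inr unfolding supp_def by auto
      then show False using key[OF T2 L2 T1 L1] e Inr by blast
    qed
  next
    assume e: "e \<in> T2 - T1"
    show False
    proof (cases e)
      case (Inl j)
      then have "j \<in> supp T1" using e s1 s2 unfolding supp_def by blast
      then have "Inr j \<in> T1" using e Inl unfolding supp_def by auto
      then show False using key[OF T2 L2 T1 L1] e Inl by blast
    next
      case (Inr j)
      then have "j \<in> supp T1" using e s1 s2 unfolding supp_def by blast
      then have "Inl j \<in> T1" using e Inr unfolding supp_def by auto
      then show False using key[OF T1 L1 T2 L2] e Inr by blast
    qed
  qed
qed

end
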